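(* Let $R=F/I$ be a standard algebra, where $F=k\langle x_1,\dots,x_n\rangle$ and $x_1,\dots,x_n$ is a basis of $R_1$. The following are equivalent: (i) $R$ is initially Koszul with Groebner flag $(x_1,\dots,x_n)$; (ii) $R$ is PBW with respect to the degree-lexicographical order with $x_1<\dots<x_n$ (i.e. the reduced Groebner basis $G$ of $I$ with respect to this order consists of quadratic elements), and the set $\mathrm{lm}\,G$ of leading monomials of $G$ has the property: if $x_kx_j\in\mathrm{lm}\,G$ then $x_kx_i\in\mathrm{lm}\,G$ for all $i<j$; (iii) the monomial algebra $R'=F/(\mathrm{lm}\,G)$ (with $G$ the reduced Groebner basis of $I$ for the same order) is initially Koszul with Groebner flag $(x_1,\dots,x_n)$.
   Context: A standard algebra $R$: graded, $R_0=k$, generated by $R_1$; $R_+=\bigoplus_{i>0}R_i$. For a basis $x_1,\dots,x_n$ of $R_1$ let $I_k=x_1R+\dots+x_kR$ ($I_0=0$). A Koszul filtration is a family $\mathbf F$ of right ideals such that: (1) each member is generated by elements of $R_1$; (2) $0,R_+\in\mathbf F$; (3) for every $0\ne I\in\mathbf F$ there exist $J\in\mathbf F$, $J\ne I$, and $x\in R_1$ with $I=J+xR$ and $(J:x)=\{a\in R: xa\in J\}\in\mathbf F$. $R$ is initially Koszul with Groebner flag $(x_1,\dots,x_n)$ if the family $\{I_0,I_1,\dots,I_n\}$ is itself a Koszul filtration; equivalently, for each $1\le k\le n$ the right ideal $\{a\in R: x_ka\in I_{k-1}\}$ equals $I_j$ for some $j$. *)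

theory Defs
  imports Main "HOL-Library.Sublist"
begin

text \<open>Words are lists of letters;
  letter i (0 \<le> i < n) stands for the generator x_(i+1), so the order of letters
  0 < 1 < ... < n-1 is the order x_1 < ... < x_n. A noncommutative polynomial is a
  function from words to coefficients; F n is the set of those with finite support
  in words over the letters {0..<n}.\<close>

type_synonym 'k ncpoly = "nat list \<Rightarrow> 'k"

definition ncF :: "nat \<Rightarrow> ('k::zero) ncpoly set" where
  "ncF n = {f. finite {w. f w \<noteq> 0} \<and> (\<forall>w. f w \<noteq> 0 \<longrightarrow> set w \<subseteq> {..<n})}"

definition nc_zero :: "('k::zero) ncpoly" where
  "nc_zero = (\<lambda>w. 0)"

definition nc_add :: "('k::plus) ncpoly \<Rightarrow> 'k ncpoly \<Rightarrow> 'k ncpoly" where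
  "nc_add f g = (\<lambda>w. f w + g w)"

definition nc_mul :: "('k::comm_semiring_1) ncpoly \<Rightarrow> 'k ncpoly \<Rightarrow> 'k ncpoly" where
  "nc_mul f g = (\<lambda>w. \<Sum>i\<le>length w. f (take i w) * g (drop i w))"

definition nc_mono :: "nat list \<Rightarrow> ('k::{zero,one}) ncpoly" where
  "nc_mono u = (\<lambda>w. if w = u then 1 else 0)"

definition nc_var :: "nat \<Rightarrow> ('k::{zero,one}) ncpoly" where
  "nc_var i = nc_mono [i]"

definition two_sided_ideal :: "nat \<Rightarrow> ('k::field) ncpoly set \<Rightarrow> bool" where
  "two_sided_ideal n I \<longleftrightarrow> I \<subseteq> ncF n \<and> nc_zero \<in> I \<and>
     (\<forall>f\<in>I. \<forall>g\<in>I. nc_add f g \<in> I) \<and>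
     (\<forall>f\<in>I. \<forall>a\<in>ncF n. nc_mul a f \<in> I \<and> nc_mul f a \<in> I)"

definition ideal_gen :: "nat \<Rightarrow> ('k::field) ncpoly set \<Rightarrow> 'k ncpoly set" where
  "ideal_gen n S = \<Inter>{I. two_sided_ideal n I \<and> S \<subseteq> I}"

definition homogeneous_set :: "('k::zero) ncpoly set \<Rightarrow> bool" where
  "homogeneous_set I \<longleftrightarrow> (\<forall>f\<in>I. \<forall>d. (\<lambda>w. if length w = d then f w else 0) \<in> I)"

text \<open>R = F/I is a standard algebra with x_1..x_n a basis of R_1: I is a homogeneous
  two-sided ideal containing no nonzero element of degree \<le> 1.\<close>
definition standard_ideal :: "nat \<Rightarrow> ('k::field) ncpoly set \<Rightarrow> bool" where
  "standard_ideal n I \<longleftrightarrow> two_sided_ideal n I \<and> homogeneous_set I \<and>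
     (\<forall>f\<in>I. \<forall>w. length w \<le> 1 \<longrightarrow> f w = 0)"

text \<open>Preimage in F of the right ideal I_k = x_1 R + ... + x_k R of R = F/I.\<close>
definition flag_ideal :: "nat \<Rightarrow> ('k::field) ncpoly set \<Rightarrow> nat \<Rightarrow> 'k ncpoly set" where
  "flag_ideal n I k = {f. \<exists>g h. g \<in> I \<and> (\<forall>i<k. h i \<in> ncF n) \<and>
       f = (\<lambda>w. g w + (\<Sum>i<k. nc_mul (nc_var i) (h i) w))}"

text \<open>Initially Koszul with Groebner flag (x_1,...,x_n): for each 1 \<le> k \<le> n,
  (I_{k-1} : x_k) = I_j for some j (computed via preimages in F).\<close>
definition initially_koszul :: "nat \<Rightarrow> ('k::field) ncpoly set \<Rightarrow> bool" where
  "initially_koszul n I \<longleftrightarrow>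
     (\<forall>k\<in>{1..n}. \<exists>j\<le>n.
        {a \<in> ncF n. nc_mul (nc_var (k - 1)) a \<in> flag_ideal n I (k - 1)} = flag_ideal n I j)"

definition deglex_less :: "nat list \<Rightarrow> nat list \<Rightarrow> bool" where
  "deglex_less u v \<longleftrightarrow> length u < length v \<or>
     (length u = length v \<and> (u, v) \<in> lexord {(a, b). a < b})"

definition lm :: "('k::zero) ncpoly \<Rightarrow> nat list" where
  "lm f = (THE w. f w \<noteq> 0 \<and> (\<forall>v. f v \<noteq> 0 \<longrightarrow> v = w \<or> deglex_less v w))"

definition groebner_basis :: "nat \<Rightarrow> ('k::field) ncpoly set \<Rightarrow> 'k ncpoly set \<Rightarrow> bool" where
  "groebner_basis n I G \<longleftrightarrow> G \<subseteq> I \<and> nc_zero \<notin> G \<and>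
     (\<forall>f\<in>I. f \<noteq> nc_zero \<longrightarrow> (\<exists>g\<in>G. sublist (lm g) (lm f)))"

definition reduced_groebner_basis :: "nat \<Rightarrow> ('k::field) ncpoly set \<Rightarrow> 'k ncpoly set \<Rightarrow> bool" where
  "reduced_groebner_basis n I G \<longleftrightarrow> groebner_basis n I G \<and>
     (\<forall>g\<in>G. g (lm g) = 1) \<and>
     (\<forall>g\<in>G. \<forall>w. g w \<noteq> 0 \<longrightarrow>
        (\<forall>g'\<in>G. (g' \<noteq> g \<or> w \<noteq> lm g) \<longrightarrow> \<not> sublist (lm g') w))"

end

theory Submission
  imports Defs
begin

lemma dl_conv: "{(u,v). deglex_less u v} = lenlex {(a,b). a<(b::nat)}"
  by (auto simp: deglex_less_def lenlex_conv lexord_lex)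

lemma wf_dl: "wf {(u,v). deglex_less u v}"
  unfolding dl_conv by (intro wf_lenlex) (simp add: wf_less)

lemma dl_irrefl: "\<not> deglex_less u u"
  by (auto simp: deglex_less_def lexord_irreflexive)

lemma trans_less_rel: "trans {(a,b). a<(b::nat)}"
  by (auto simp: trans_def)

lemma dl_trans: "deglex_less u v \<Longrightarrow> deglex_less v w \<Longrightarrow> deglex_less u w"
  unfolding deglex_less_def
  using lexord_trans[OF _ _ trans_less_rel] by auto

lemma dl_total: "u \<noteq> v \<Longrightarrow> deglex_less u v \<or> deglex_less v u"
  unfolding deglex_less_def using lexord_linear[of "{(a,b). a<(b::nat)}" u v]
  by (metis (mono_tags, lifting) case_prodI linorder_less_linear mem_Collect_eq)

lemma dl_append:
  assumes "length u = length v" "deglex_less u v"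
  shows "deglex_less (p@u@s) (p@v@s)"
proof -
  have "(u,v) \<in> lex {(a,b). a<(b::nat)}" using assms by (simp add: deglex_less_def lexord_lex)
  then obtain xys x y xs' ys' where u: "u = xys @ x # xs'" and v: "v = xys @ y # ys'" and xy: "x < y"
    by (auto simp: lex_conv)
  have "(p@u@s, p@v@s) \<in> lex {(a,b). a<(b::nat)}"
    unfolding lex_conv using assms(1) xy
    by (auto simp: u v intro!: exI[of _ "p@xys"])
  then show ?thesis by (simp add: deglex_less_def lexord_lex)
qed

lemma dl_hd:
  assumes "length u = length v" "deglex_less u v" "v \<noteq> []"
  shows "hd u \<le> hd v"
proof -
  have "(u,v) \<in> lex {(a,b). a<(b::nat)}" using assms by (simp add: deglex_less_def lexord_lex)
  then obtain xys x y xs' ys' where u: "u = xys @ x # xs'" and v: "v = xys @ y # ys'" and xy: "x < y"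
    by (auto simp: lex_conv)
  show ?thesis using xy by (cases xys) (auto simp: u v)
qed

definition scal :: "'k::comm_semiring_1 \<Rightarrow> 'k ncpoly \<Rightarrow> 'k ncpoly" where
  "scal c f = (\<lambda>w. c * f w)"

lemma mul_mono_left:
  "nc_mul (nc_mono p) f w = (if take (length p) w = p then f (drop (length p) w) else (0::'k::comm_semiring_1))"
proof -
  have "nc_mul (nc_mono p) f w = (\<Sum>i\<le>length w. if i = length p then (if take (length p) w = p then f (drop (length p) w) else 0) else (0::'k))"
    unfolding nc_mul_def nc_mono_def
    by (intro sum.cong refl) (auto simp: min_def split: if_splits)
  also have "\<dots> = (if take (length p) w = p then f (drop (length p) w) else 0)"
    by (auto simp: min_def)
  finally show ?thesis .
qed

lemma mul_mono_right:
  "nc_mul f (nc_mono s) w = (if length s \<le> length w \<and> drop (length w - length s) w = s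
      then f (take (length w - length s) w) else (0::'k::comm_semiring_1))"
proof -
  have "nc_mul f (nc_mono s) w = (\<Sum>i\<le>length w. if i = length w - length s then
      (if length s \<le> length w \<and> drop (length w - length s) w = s then f (take (length w - length s) w) else 0) else (0::'k))"
    unfolding nc_mul_def nc_mono_def
    by (intro sum.cong refl) auto
  also have "\<dots> = (if length s \<le> length w \<and> drop (length w - length s) w = s then f (take (length w - length s) w) else 0)"
    by auto
  finally show ?thesis .
qed

lemma mul_var_Nil[simp]: "nc_mul (nc_var k) a [] = (0::'k::comm_semiring_1)"
  by (simp add: nc_var_def mul_mono_left)

lemma mul_var_Cons[simp]: "nc_mul (nc_var k) a (c#u) = (if c = k then a u else (0::'k::comm_semiring_1))"
  by (simp add: nc_var_def mul_mono_left)

lemma mul_mono_Nil: "nc_mul (nc_mono []) f = (f::'k::comm_semiring_1 ncpoly)"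
  by (rule ext) (simp add: mul_mono_left)

lemma mul_scal: "nc_mul (scal c a) f = scal c (nc_mul a f)"
  by (rule ext) (simp add: nc_mul_def scal_def sum_distrib_left mult.assoc)

lemma scal_as_mul: "scal c f = nc_mul (scal c (nc_mono [])) f"
  by (simp add: mul_scal mul_mono_Nil)

lemma sandwich_at:
  "nc_mul (nc_mul (nc_mono p) f) (nc_mono s) (p@u@s) = (f u :: 'k::comm_semiring_1)"
  by (simp add: mul_mono_left mul_mono_right)

lemma sandwich_nz:
  assumes "nc_mul (nc_mul (nc_mono p) f) (nc_mono s) v \<noteq> (0 :: 'k::comm_semiring_1)"
  shows "\<exists>u. v = p@u@s \<and> f u \<noteq> 0"
proof -
  let ?m = "length v - length s"
  have 1: "length s \<le> length v" "drop ?m v = s" "take (length p) (take ?m v) = p"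
    and 2: "f (drop (length p) (take ?m v)) \<noteq> 0"
    using assms by (auto simp: mul_mono_left mul_mono_right split: if_splits)
  have "v = take ?m v @ drop ?m v" by simp
  also have "take ?m v = take (length p) (take ?m v) @ drop (length p) (take ?m v)"
    by (rule append_take_drop_id[symmetric])
  finally have "v = p @ drop (length p) (take ?m v) @ s" using 1 by simp
  then show ?thesis using 2 by blast
qed

lemma mono_F: "set w \<subseteq> {..<n} \<Longrightarrow> nc_mono w \<in> ncF n"
  by (auto simp: ncF_def nc_mono_def)

lemma zero_F: "nc_zero \<in> ncF n"
  by (auto simp: ncF_def nc_zero_def)

lemma scal_F: "(f::'k::comm_semiring_1 ncpoly) \<in> ncF n \<Longrightarrow> scal c f \<in> ncF n"
proof -
  assume f: "f \<in> ncF n"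
  have "{w. c * f w \<noteq> 0} \<subseteq> {w. f w \<noteq> 0}" by auto
  then have "finite {w. c * f w \<noteq> 0}" using f by (auto simp: ncF_def elim: finite_subset)
  moreover have "set w \<subseteq> {..<n}" if "c * f w \<noteq> 0" for w
  proof -
    from that have "f w \<noteq> 0" by auto
    then show ?thesis using f by (simp add: ncF_def)
  qed
  ultimately show ?thesis by (simp add: ncF_def scal_def)
qed

lemma scal_mono: "scal c (nc_mono v) w = (if v = w then c else (0::'k::comm_semiring_1))"
  by (auto simp: scal_def nc_mono_def)

lemma add_F: "(f::'k::comm_semiring_1 ncpoly) \<in> ncF n \<Longrightarrow> g \<in> ncF n \<Longrightarrow> nc_add f g \<in> ncF n"
proof -
  assume f: "f \<in> ncF n" and g: "g \<in> ncF n"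
  have "{w. f w + g w \<noteq> 0} \<subseteq> {w. f w \<noteq> 0} \<union> {w. g w \<noteq> 0}" by auto
  moreover have "finite ({w. f w \<noteq> 0} \<union> {w. g w \<noteq> 0})" using f g by (simp add: ncF_def)
  ultimately have "finite {w. f w + g w \<noteq> 0}" by (rule finite_subset)
  moreover have "set w \<subseteq> {..<n}" if "f w + g w \<noteq> 0" for w
  proof -
    from that have "f w \<noteq> 0 \<or> g w \<noteq> 0" by auto
    then show ?thesis using f g by (auto simp: ncF_def)
  qed
  ultimately show ?thesis by (simp add: ncF_def nc_add_def)
qed

lemma mul_F:
  assumes "a \<in> ncF n" "f \<in> ncF n"
  shows "nc_mul a f \<in> ncF n"
proof -
  have sub: "{w. nc_mul a f w \<noteq> 0} \<subseteq> (\<lambda>(u,v). u@v) ` ({w. a w \<noteq> 0} \<times> {w. f w \<noteq> 0})"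
  proof
    fix w assume "w \<in> {w. nc_mul a f w \<noteq> 0}"
    then obtain i where "a (take i w) * f (drop i w) \<noteq> 0"
      unfolding nc_mul_def by (auto elim: sum.not_neutral_contains_not_neutral)
    then show "w \<in> (\<lambda>(u,v). u@v) ` ({w. a w \<noteq> 0} \<times> {w. f w \<noteq> 0})"
      by (auto intro!: image_eqI[of _ _ "(take i w, drop i w)"])
  qed
  have "finite {w. nc_mul a f w \<noteq> 0}"
    using assms by (intro finite_subset[OF sub]) (auto simp: ncF_def)
  moreover have "set w \<subseteq> {..<n}" if "nc_mul a f w \<noteq> 0" for w
  proof -
    from sub that have "w \<in> (\<lambda>(u,v). u@v) ` ({w. a w \<noteq> 0} \<times> {w. f w \<noteq> 0})" by blast
    then obtain u v where "w = u@v" "a u \<noteq> 0" "f v \<noteq> 0" by auto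
    then show ?thesis using assms by (auto simp: ncF_def)
  qed
  ultimately show ?thesis by (auto simp: ncF_def)
qed

lemma F_sum_mono:
  assumes "f \<in> ncF n"
  shows "f = (\<lambda>w. \<Sum>v\<in>{v. f v \<noteq> 0}. scal (f v) (nc_mono v) w)"
proof
  fix w
  have fin: "finite {v. f v \<noteq> 0}" using assms by (simp add: ncF_def)
  show "f w = (\<Sum>v\<in>{v. f v \<noteq> 0}. scal (f v) (nc_mono v) w)"
    using fin by (simp add: scal_mono sum.delta)
qed

lemma span_principle:
  assumes f: "f \<in> ncF n"
    and z: "nc_zero \<in> S"
    and a: "\<And>x y. x \<in> S \<Longrightarrow> y \<in> S \<Longrightarrow> nc_add x y \<in> S"
    and s: "\<And>c x. x \<in> S \<Longrightarrow> scal c x \<in> S"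
    and m: "\<And>v. f v \<noteq> 0 \<Longrightarrow> nc_mono v \<in> S"
  shows "f \<in> S"
proof -
  have fin: "finite {v. f v \<noteq> 0}" using f by (simp add: ncF_def)
  have "\<And>A. finite A \<Longrightarrow> A \<subseteq> {v. f v \<noteq> 0} \<Longrightarrow> (\<lambda>w. \<Sum>v\<in>A. scal (f v) (nc_mono v) w) \<in> S"
  proof -
    fix A :: "nat list set" assume "finite A" "A \<subseteq> {v. f v \<noteq> 0}"
    then show "(\<lambda>w. \<Sum>v\<in>A. scal (f v) (nc_mono v) w) \<in> S"
    proof (induction A rule: finite_induct)
      case empty then show ?case using z by (simp add: nc_zero_def)
    next
      case (insert x F)
      have "(\<lambda>w. \<Sum>v\<in>insert x F. scal (f v) (nc_mono v) w) =
            nc_add (scal (f x) (nc_mono x)) (\<lambda>w. \<Sum>v\<in>F. scal (f v) (nc_mono v) w)"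
        using insert by (simp add: nc_add_def)
      then show ?case using insert a s m by auto
    qed
  qed
  from this[OF fin] F_sum_mono[OF f] show ?thesis by simp
qed

locale tsi =
  fixes n :: nat and I :: "('k::field) ncpoly set"
  assumes tsi: "two_sided_ideal n I"
begin

lemma I_F: "f \<in> I \<Longrightarrow> f \<in> ncF n" using tsi by (auto simp: two_sided_ideal_def)
lemma I_zero: "nc_zero \<in> I" using tsi by (auto simp: two_sided_ideal_def)
lemma I_add: "f \<in> I \<Longrightarrow> g \<in> I \<Longrightarrow> nc_add f g \<in> I" using tsi by (auto simp: two_sided_ideal_def)
lemma I_mulL: "f \<in> I \<Longrightarrow> a \<in> ncF n \<Longrightarrow> nc_mul a f \<in> I" using tsi by (auto simp: two_sided_ideal_def)
lemma I_mulR: "f \<in> I \<Longrightarrow> a \<in> ncF n \<Longrightarrow> nc_mul f a \<in> I" using tsi by (auto simp: two_sided_ideal_def)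
lemma I_scal: "f \<in> I \<Longrightarrow> scal c f \<in> I"
  by (subst scal_as_mul) (auto intro!: I_mulL scal_F mono_F)
lemma I_diff: "f \<in> I \<Longrightarrow> g \<in> I \<Longrightarrow> (\<lambda>w. f w - g w) \<in> I"
proof -
  assume "f \<in> I" "g \<in> I"
  then have "nc_add f (scal (-1) g) \<in> I" by (intro I_add I_scal)
  then show ?thesis by (simp add: nc_add_def scal_def)
qed
lemma I_sandwich: "f \<in> I \<Longrightarrow> set p \<subseteq> {..<n} \<Longrightarrow> set s \<subseteq> {..<n} \<Longrightarrow>
   nc_mul (nc_mul (nc_mono p) f) (nc_mono s) \<in> I"
  by (intro I_mulL I_mulR mono_F)

end

lemma max_exists:
  assumes "finite S" "S \<noteq> {}"
  shows "\<exists>m\<in>S. \<forall>v\<in>S. v = m \<or> deglex_less v m"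
  using assms
proof (induction S rule: finite_ne_induct)
  case (singleton x) then show ?case by auto
next
  case (insert x F)
  then obtain m where m: "m \<in> F" "\<forall>v\<in>F. v = m \<or> deglex_less v m" by auto
  show ?case
  proof (cases "deglex_less x m")
    case True then show ?thesis using m by auto
  next
    case False
    then have "x = m \<or> deglex_less m x" using dl_total by blast
    have "\<forall>v\<in>insert x F. v = x \<or> deglex_less v x"
    proof
      fix v assume "v \<in> insert x F"
      then consider "v = x" | "v = m" | "deglex_less v m" using m by blast
      then show "v = x \<or> deglex_less v x"
      proof cases
        case 3 then show ?thesis using \<open>x = m \<or> deglex_less m x\<close> dl_trans by metis
      qed (use \<open>x = m \<or> deglex_less m x\<close> in auto)
    qed
    then show ?thesis by blast
  qed
qed

lemma lm_prop:
  assumes "f \<in> ncF n" "f \<noteq> nc_zero"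
  shows "f (lm f) \<noteq> 0" "\<And>v. f v \<noteq> 0 \<Longrightarrow> v = lm f \<or> deglex_less v (lm f)"
proof -
  have fin: "finite {v. f v \<noteq> 0}" using assms by (simp add: ncF_def)
  have ne: "{v. f v \<noteq> 0} \<noteq> {}" using assms by (auto simp: nc_zero_def)
  obtain m where m: "f m \<noteq> 0" "\<forall>v. f v \<noteq> 0 \<longrightarrow> v = m \<or> deglex_less v m"
    using max_exists[OF fin ne] by auto
  have "lm f = m"
    unfolding lm_def
  proof (rule the_equality)
    show "f m \<noteq> 0 \<and> (\<forall>v. f v \<noteq> 0 \<longrightarrow> v = m \<or> deglex_less v m)" using m by auto
  next
    fix w assume w: "f w \<noteq> 0 \<and> (\<forall>v. f v \<noteq> 0 \<longrightarrow> v = w \<or> deglex_less v w)"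
    then have "w = m \<or> deglex_less w m" "m = w \<or> deglex_less m w" using m by auto
    then show "w = m" using dl_trans dl_irrefl by blast
  qed
  then show "f (lm f) \<noteq> 0" "\<And>v. f v \<noteq> 0 \<Longrightarrow> v = lm f \<or> deglex_less v (lm f)" using m by auto
qed

lemma lm_mono: "lm (nc_mono w :: 'k::zero_neq_one ncpoly) = w"
  unfolding lm_def
  by (rule the_equality) (auto simp: nc_mono_def split: if_splits)

lemma sublist_antisym': "sublist a b \<Longrightarrow> sublist b a \<Longrightarrow> a = b"
proof -
  assume "sublist a b" "sublist b a"
  then obtain p s p' s' where 1: "b = p @ a @ s" "a = p' @ b @ s'" unfolding sublist_def by blast
  have "length b = length (p @ a @ s)" using 1(1) by (rule arg_cong)
  moreover have "length a = length (p' @ b @ s')" using 1(2) by (rule arg_cong)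
  ultimately have "length b = length p + length a + length s" "length a = length p' + length b + length s'"
    by simp_all
  then have "length p = 0" "length s = 0" by linarith+
  then show "a = b" using 1 by simp
qed

definition bnd :: "nat list set \<Rightarrow> nat list \<Rightarrow> bool" where
  "bnd S v \<longleftrightarrow> (\<exists>u\<in>S. length v = length u \<and> (v = u \<or> deglex_less v u))"

lemma bnd_trans: "bnd S v \<Longrightarrow> (\<forall>u\<in>S. bnd T u) \<Longrightarrow> bnd T v"
  unfolding bnd_def using dl_trans by metis

definition Wk :: "nat \<Rightarrow> ('k::zero) ncpoly \<Rightarrow> bool" where
  "Wk k f \<longleftrightarrow> (\<forall>w. f w \<noteq> 0 \<longrightarrow> w \<noteq> [] \<and> hd w < k)"

locale kz = tsi n I for n and I :: "('k::field) ncpoly set" +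
  fixes G :: "'k ncpoly set"
  assumes std: "standard_ideal n I"
    and rgb: "reduced_groebner_basis n I G"
begin

lemma hom: "f \<in> I \<Longrightarrow> (\<lambda>w. if length w = d then f w else 0) \<in> I"
  using std by (auto simp: standard_ideal_def homogeneous_set_def)
lemma low: "f \<in> I \<Longrightarrow> length w \<le> 1 \<Longrightarrow> f w = 0"
  using std by (auto simp: standard_ideal_def)
lemma G_I: "g \<in> G \<Longrightarrow> g \<in> I"
  using rgb by (auto simp: reduced_groebner_basis_def groebner_basis_def)
lemma G_nz: "g \<in> G \<Longrightarrow> g \<noteq> nc_zero"
  using rgb by (auto simp: reduced_groebner_basis_def groebner_basis_def)
lemma gb: "f \<in> I \<Longrightarrow> f \<noteq> nc_zero \<Longrightarrow> \<exists>g\<in>G. sublist (lm g) (lm f)"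
  using rgb by (auto simp: reduced_groebner_basis_def groebner_basis_def)
lemma G_lc: "g \<in> G \<Longrightarrow> g (lm g) = 1"
  using rgb by (auto simp: reduced_groebner_basis_def)
lemma G_red: "g \<in> G \<Longrightarrow> g w \<noteq> 0 \<Longrightarrow> g' \<in> G \<Longrightarrow> g' \<noteq> g \<or> w \<noteq> lm g \<Longrightarrow> \<not> sublist (lm g') w"
  using rgb unfolding reduced_groebner_basis_def by blast

lemma G_F: "g \<in> G \<Longrightarrow> g \<in> ncF n" using G_I I_F by blast
lemma G_max: "g \<in> G \<Longrightarrow> g v \<noteq> 0 \<Longrightarrow> v = lm g \<or> deglex_less v (lm g)"
  using lm_prop(2)[OF G_F G_nz] by blast
lemma G_len2: "g \<in> G \<Longrightarrow> 2 \<le> length (lm g)"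
  using low[OF G_I, of g "lm g"] G_lc[of g] by force
lemma lm_letters: "g \<in> G \<Longrightarrow> set (lm g) \<subseteq> {..<n}"
  using G_F[of g] G_lc[of g] by (auto simp: ncF_def)

lemma G_hom:
  assumes g: "g \<in> G" and v: "g v \<noteq> 0"
  shows "length v = length (lm g)"
proof (rule ccontr)
  assume ne: "length v \<noteq> length (lm g)"
  let ?d = "length (lm g)"
  let ?e = "\<lambda>w. g w - (if length w = ?d then g w else 0)"
  have eI: "?e \<in> I" using G_I[OF g] by (intro I_diff hom)
  have ev: "?e v \<noteq> 0" using ne v by simp
  have enz: "?e \<noteq> nc_zero"
  proof
    assume "?e = nc_zero"
    from fun_cong[OF this, of v] ev show False by (simp add: nc_zero_def)
  qed
  obtain g' where g': "g' \<in> G" "sublist (lm g') (lm ?e)" using gb[OF eI enz] by blast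
  have "?e (lm ?e) \<noteq> 0" using lm_prop(1)[OF I_F[OF eI] enz] .
  then have "g (lm ?e) \<noteq> 0" "lm ?e \<noteq> lm g" by (auto split: if_splits)
  then show False using G_red[OF g _ g'(1)] g'(2) by blast
qed

definition nw :: "nat list \<Rightarrow> bool" where
  "nw w \<longleftrightarrow> (\<forall>g\<in>G. \<not> sublist (lm g) w)"

lemma nw_sub: "nw w \<Longrightarrow> sublist u w \<Longrightarrow> nw u"
  unfolding nw_def using sublist_order.order_trans by blast

lemma G_tail_nw: "g \<in> G \<Longrightarrow> g v \<noteq> 0 \<Longrightarrow> v \<noteq> lm g \<Longrightarrow> nw v"
  unfolding nw_def using G_red by blast

lemma lm_proper_nw:
  assumes g: "g \<in> G" and u: "sublist u (lm g)" "u \<noteq> lm g"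
  shows "nw u"
  unfolding nw_def
proof
  fix g' assume g': "g' \<in> G"
  show "\<not> sublist (lm g') u"
  proof
    assume s: "sublist (lm g') u"
    then have s2: "sublist (lm g') (lm g)" using u sublist_order.order_trans by blast
    show False
    proof (cases "g' = g")
      case True
      then show False using s u sublist_antisym' by blast
    next
      case False
      then show False using G_red[OF g _ g'] s2 G_lc[OF g] by auto
    qed
  qed
qed

lemma lm_not_nw: "g \<in> G \<Longrightarrow> \<not> nw (lm g)"
  unfolding nw_def by auto

lemma I_normal_zero:
  assumes f: "f \<in> I" and nf: "\<And>v. f v \<noteq> 0 \<Longrightarrow> nw v"
  shows "f = nc_zero"
proof (rule ccontr)
  assume nz: "f \<noteq> nc_zero"
  obtain g where "g \<in> G" "sublist (lm g) (lm f)" using gb[OF f nz] by blast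
  moreover have "nw (lm f)" using nf lm_prop(1)[OF I_F[OF f] nz] by blast
  ultimately show False unfolding nw_def by blast
qed

definition Q :: "nat list set \<Rightarrow> 'k ncpoly \<Rightarrow> bool" where
  "Q S f \<longleftrightarrow> (\<exists>r h. h \<in> I \<and> r \<in> ncF n \<and> f = nc_add r h \<and> (\<forall>v. r v \<noteq> 0 \<longrightarrow> nw v \<and> bnd S v))"

lemma Q_zero: "Q S nc_zero"
  unfolding Q_def
  by (rule exI[of _ nc_zero], rule exI[of _ nc_zero]) (auto simp: I_zero zero_F nc_add_def, auto simp: nc_zero_def)

lemma Q_add:
  assumes "Q S f" "Q S f'"
  shows "Q S (nc_add f f')"
proof -
  obtain r h where 1: "h \<in> I" "r \<in> ncF n" "f = nc_add r h" "\<forall>v. r v \<noteq> 0 \<longrightarrow> nw v \<and> bnd S v"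
    using assms(1) unfolding Q_def by blast
  obtain r' h' where 2: "h' \<in> I" "r' \<in> ncF n" "f' = nc_add r' h'" "\<forall>v. r' v \<noteq> 0 \<longrightarrow> nw v \<and> bnd S v"
    using assms(2) unfolding Q_def by blast
  have "nc_add f f' = nc_add (nc_add r r') (nc_add h h')"
    using 1 2 by (auto simp: nc_add_def algebra_simps)
  moreover have "\<forall>v. nc_add r r' v \<noteq> 0 \<longrightarrow> nw v \<and> bnd S v"
  proof (intro allI impI)
    fix v assume "nc_add r r' v \<noteq> 0"
    then have "r v \<noteq> 0 \<or> r' v \<noteq> 0" by (auto simp: nc_add_def)
    then show "nw v \<and> bnd S v" using 1 2 by blast
  qed
  ultimately show ?thesis unfolding Q_def using 1 2 by (blast intro: I_add add_F)
qed

lemma Q_scal: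
  assumes "Q S f"
  shows "Q S (scal c f)"
proof -
  obtain r h where 1: "h \<in> I" "r \<in> ncF n" "f = nc_add r h" "\<forall>v. r v \<noteq> 0 \<longrightarrow> nw v \<and> bnd S v"
    using assms(1) unfolding Q_def by blast
  have "scal c f = nc_add (scal c r) (scal c h)"
    using 1 by (auto simp: nc_add_def scal_def algebra_simps)
  moreover have "\<forall>v. scal c r v \<noteq> 0 \<longrightarrow> nw v \<and> bnd S v"
    using 1 by (auto simp: scal_def)
  ultimately show ?thesis unfolding Q_def using 1 by (blast intro: I_scal scal_F)
qed

lemma Q_addI:
  assumes "Q S f" "h0 \<in> I"
  shows "Q S (nc_add f h0)"
proof -
  obtain r h where 1: "h \<in> I" "r \<in> ncF n" "f = nc_add r h" "\<forall>v. r v \<noteq> 0 \<longrightarrow> nw v \<and> bnd S v"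
    using assms(1) unfolding Q_def by blast
  have "nc_add f h0 = nc_add r (nc_add h h0)"
    using 1 by (auto simp: nc_add_def algebra_simps)
  then show ?thesis unfolding Q_def using 1 assms(2) by (blast intro: I_add)
qed

lemma Q_weaken:
  assumes "Q S f" "\<forall>u\<in>S. bnd T u"
  shows "Q T f"
  using assms bnd_trans unfolding Q_def by metis

lemma NF_mono:
  "set w \<subseteq> {..<n} \<Longrightarrow> Q {w} (nc_mono w)"
proof (induction w rule: wf_induct[OF wf_dl])
  case (1 w)
  note IH = 1(1)[rule_format]
  show ?case
  proof (cases "nw w")
    case True
    show ?thesis unfolding Q_def
      apply (rule exI[of _ "nc_mono w"], rule exI[of _ nc_zero])
      using True 1(2) by (auto simp: I_zero mono_F nc_add_def, auto simp: nc_zero_def nc_mono_def bnd_def split: if_splits)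
  next
    case False
    then obtain g where g: "g \<in> G" "sublist (lm g) w" unfolding nw_def by blast
    then obtain p s where w: "w = p @ lm g @ s" unfolding sublist_def by blast
    have ps: "set p \<subseteq> {..<n}" "set s \<subseteq> {..<n}" using 1(2) w by auto
    define h0 where "h0 = nc_mul (nc_mul (nc_mono p) g) (nc_mono s)"
    have h0I: "h0 \<in> I" unfolding h0_def using G_I[OF g(1)] ps by (rule I_sandwich)
    define d where "d = (\<lambda>v. nc_mono w v - h0 v)"
    have eq: "nc_mono w = nc_add d h0" by (auto simp: d_def nc_add_def)
    have dF: "d \<in> ncF n"
    proof -
      have "nc_add (nc_mono w) (scal (-1) h0) \<in> ncF n"
        using 1(2) h0I by (intro add_F mono_F scal_F I_F)
      then show ?thesis by (simp add: d_def nc_add_def scal_def)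
    qed
    have "Q {w} d"
    proof (rule span_principle[OF dF, of "{f. Q {w} f}", simplified])
      show "Q {w} nc_zero" by (rule Q_zero)
      show "\<And>x y. Q {w} x \<Longrightarrow> Q {w} y \<Longrightarrow> Q {w} (nc_add x y)" by (rule Q_add)
      show "\<And>c x. Q {w} x \<Longrightarrow> Q {w} (scal c x)" by (rule Q_scal)
    next
      fix v assume dv: "d v \<noteq> 0"
      have "d w = 0" using G_lc[OF g(1)] by (simp add: d_def h0_def w sandwich_at, simp add: nc_mono_def)
      then have vw: "v \<noteq> w" using dv by auto
      then have "h0 v \<noteq> 0" using dv by (auto simp: d_def nc_mono_def)
      then obtain u where u: "v = p @ u @ s" "g u \<noteq> 0" using sandwich_nz unfolding h0_def by blast
      have "u \<noteq> lm g" using u vw w by auto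
      then have ul: "deglex_less u (lm g)" "length u = length (lm g)"
        using G_max[OF g(1) u(2)] G_hom[OF g(1) u(2)] by auto
      have vl: "deglex_less v w" "length v = length w"
        using dl_append[OF ul(2) ul(1)] ul(2) u(1) w by auto
      have "set v \<subseteq> {..<n}" using \<open>h0 v \<noteq> 0\<close> I_F[OF h0I] by (auto simp: ncF_def)
      then have "Q {v} (nc_mono v)" using IH vl(1) by blast
      then show "Q {w} (nc_mono v)" by (rule Q_weaken) (use vl in \<open>auto simp: bnd_def\<close>)
    qed
    then show ?thesis using eq Q_addI h0I by metis
  qed
qed

lemma NF:
  assumes f: "f \<in> ncF n"
  shows "Q {v. f v \<noteq> 0} f"
proof (rule span_principle[OF f, of "{x. Q {v. f v \<noteq> 0} x}", simplified])
  show "Q {v. f v \<noteq> 0} nc_zero" by (rule Q_zero)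
  show "\<And>x y. Q {v. f v \<noteq> 0} x \<Longrightarrow> Q {v. f v \<noteq> 0} y \<Longrightarrow> Q {v. f v \<noteq> 0} (nc_add x y)" by (rule Q_add)
  show "\<And>c x. Q {v. f v \<noteq> 0} x \<Longrightarrow> Q {v. f v \<noteq> 0} (scal c x)" by (rule Q_scal)
next
  fix v assume fv: "f v \<noteq> 0"
  then have "set v \<subseteq> {..<n}" using f by (auto simp: ncF_def)
  then have "Q {v} (nc_mono v)" by (rule NF_mono)
  then show "Q {v. f v \<noteq> 0} (nc_mono v)" by (rule Q_weaken) (use fv in \<open>auto simp: bnd_def\<close>)
qed

end

lemma sum_F:
  assumes "finite A" "\<And>i. i \<in> A \<Longrightarrow> (f i :: 'k::comm_semiring_1 ncpoly) \<in> ncF n"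
  shows "(\<lambda>w. \<Sum>i\<in>A. f i w) \<in> ncF n"
  using assms
proof (induction A rule: finite_induct)
  case empty then show ?case using zero_F by (simp add: nc_zero_def)
next
  case (insert x F)
  have "nc_add (f x) (\<lambda>w. \<Sum>i\<in>F. f i w) \<in> ncF n"
    using insert by (intro add_F) auto
  then show ?case using insert by (simp add: nc_add_def)
qed

lemma var_F: "k < n \<Longrightarrow> nc_var k \<in> ncF n"
  unfolding nc_var_def by (rule mono_F) auto

lemma Cons_vimage_F:
  assumes "f \<in> ncF n" "k < n"
  shows "(\<lambda>v. f (k#v)) \<in> ncF n"
proof -
  have eq: "{v. f (k#v) \<noteq> 0} = Cons k -` {w. f w \<noteq> 0}" by auto
  have "finite (Cons k -` {w. f w \<noteq> 0})" using assms(1)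
    by (intro finite_vimageI) (auto simp: ncF_def inj_on_def)
  then have "finite {v. f (k#v) \<noteq> 0}" by (simp only: eq)
  moreover have "set v \<subseteq> {..<n}" if "f (k#v) \<noteq> 0" for v
  proof -
    from assms(1) that have "set (k#v) \<subseteq> {..<n}" unfolding ncF_def by blast
    then show ?thesis by simp
  qed
  ultimately show ?thesis by (simp add: ncF_def)
qed

lemma supp_sub_F:
  assumes "f \<in> ncF n" "\<And>w. (g::'k::zero ncpoly) w \<noteq> 0 \<Longrightarrow> f w \<noteq> 0"
  shows "g \<in> ncF n"
proof -
  have "{w. g w \<noteq> 0} \<subseteq> {w. f w \<noteq> 0}" using assms(2) by auto
  then have "finite {w. g w \<noteq> 0}" using assms(1) by (auto simp: ncF_def elim: finite_subset)
  then show ?thesis using assms by (auto simp: ncF_def)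
qed

context kz
begin

lemma J_char:
  assumes kn: "k \<le> n"
  shows "flag_ideal n I k = {f. \<exists>g\<in>I. \<exists>d\<in>ncF n. Wk k d \<and> f = nc_add g d}"
proof (intro set_eqI iffI)
  fix f assume "f \<in> flag_ideal n I k"
  then obtain g h where g: "g \<in> I" and h: "\<forall>i<k. h i \<in> ncF n"
    and f: "f = (\<lambda>w. g w + (\<Sum>i<k. nc_mul (nc_var i) (h i) w))"
    unfolding flag_ideal_def by blast
  define d where "d = (\<lambda>w. \<Sum>i<k. nc_mul (nc_var i) (h i) w)"
  have dF: "d \<in> ncF n" unfolding d_def
    using h kn by (intro sum_F) (auto intro!: mul_F var_F)
  have "Wk k d"
    unfolding Wk_def
  proof (intro allI impI)
    fix w assume "d w \<noteq> 0"
    then obtain i where i: "i < k" "nc_mul (nc_var i) (h i) w \<noteq> 0"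
      unfolding d_def by (auto elim: sum.not_neutral_contains_not_neutral)
    then show "w \<noteq> [] \<and> hd w < k" by (cases w) (auto split: if_splits)
  qed
  then show "f \<in> {f. \<exists>g\<in>I. \<exists>d\<in>ncF n. Wk k d \<and> f = nc_add g d}"
    using g dF f by (auto simp: nc_add_def d_def)
next
  fix f assume "f \<in> {f. \<exists>g\<in>I. \<exists>d\<in>ncF n. Wk k d \<and> f = nc_add g d}"
  then obtain g d where g: "g \<in> I" and dF: "d \<in> ncF n" and W: "Wk k d" and f: "f = nc_add g d"
    by blast
  define h where "h = (\<lambda>i v. d (i#v))"
  have hF: "\<forall>i<k. h i \<in> ncF n"
  proof (intro allI impI)
    fix i assume "i < k"
    show "h i \<in> ncF n"
    proof (cases "i < n")
      case True then show ?thesis unfolding h_def by (rule Cons_vimage_F[OF dF])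
    next
      case False
      have "d (i#v) = 0" for v
      proof (rule ccontr)
        assume "d (i#v) \<noteq> 0"
        then have "set (i#v) \<subseteq> {..<n}" using dF unfolding ncF_def by blast
        then show False using False by simp
      qed
      then have "h i = nc_zero" by (auto simp: h_def nc_zero_def)
      then show ?thesis using zero_F by simp
    qed
  qed
  have "d w = (\<Sum>i<k. nc_mul (nc_var i) (h i) w)" for w
  proof (cases w)
    case Nil then show ?thesis using W by (auto simp: Wk_def)
  next
    case (Cons c u)
    have "(\<Sum>i<k. nc_mul (nc_var i) (h i) w) = (\<Sum>i<k. if i = c then d (c#u) else 0)"
      by (intro sum.cong) (auto simp: Cons h_def)
    also have "\<dots> = d w" using W by (auto simp: Cons Wk_def)
    finally show ?thesis by simp
  qed
  then have "f = (\<lambda>w. g w + (\<Sum>i<k. nc_mul (nc_var i) (h i) w))"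
    by (auto simp: f nc_add_def)
  then show "f \<in> flag_ideal n I k" unfolding flag_ideal_def using g hF by blast
qed

lemma J_F: "k \<le> n \<Longrightarrow> f \<in> flag_ideal n I k \<Longrightarrow> f \<in> ncF n"
  by (auto simp: J_char intro: add_F I_F)

lemma J_W: "k \<le> n \<Longrightarrow> d \<in> ncF n \<Longrightarrow> Wk k d \<Longrightarrow> d \<in> flag_ideal n I k"
proof -
  assume "k \<le> n" "d \<in> ncF n" "Wk k d"
  moreover have "d = nc_add nc_zero d" by (simp add: nc_add_def nc_zero_def)
  ultimately show ?thesis unfolding J_char[OF \<open>k \<le> n\<close>] using I_zero by blast
qed

lemma J_addI: "k \<le> n \<Longrightarrow> f \<in> flag_ideal n I k \<Longrightarrow> h \<in> I \<Longrightarrow> nc_add f h \<in> flag_ideal n I k"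
  unfolding J_char
proof clarify
  fix g and d :: "'k ncpoly" assume "g \<in> I" "h \<in> I" "d \<in> ncF n" "Wk k d"
  then show "\<exists>g'\<in>I. \<exists>d'\<in>ncF n. Wk k d' \<and> nc_add (nc_add g d) h = nc_add g' d'"
  proof -
    have "nc_add (nc_add g d) h = nc_add (nc_add g h) d" by (auto simp: nc_add_def algebra_simps)
    moreover have "nc_add g h \<in> I" using \<open>g \<in> I\<close> \<open>h \<in> I\<close> by (rule I_add)
    ultimately show ?thesis using \<open>d \<in> ncF n\<close> \<open>Wk k d\<close> by blast
  qed
qed

lemma J_add: "k \<le> n \<Longrightarrow> f \<in> flag_ideal n I k \<Longrightarrow> f' \<in> flag_ideal n I k \<Longrightarrow> nc_add f f' \<in> flag_ideal n I k"
  unfolding J_char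
proof clarify
  fix g g' and d d' :: "'k ncpoly" assume "g \<in> I" "g' \<in> I" "d \<in> ncF n" "Wk k d" "d' \<in> ncF n" "Wk k d'"
  moreover have "Wk k (nc_add d d')" using \<open>Wk k d\<close> \<open>Wk k d'\<close>
    by (auto simp: Wk_def nc_add_def) (metis add.right_neutral)+
  ultimately show "\<exists>g''\<in>I. \<exists>d''\<in>ncF n. Wk k d'' \<and> nc_add (nc_add g d) (nc_add g' d') = nc_add g'' d''"
  proof -
    have "nc_add (nc_add g d) (nc_add g' d') = nc_add (nc_add g g') (nc_add d d')" by (auto simp: nc_add_def algebra_simps)
    moreover have "nc_add g g' \<in> I" using \<open>g \<in> I\<close> \<open>g' \<in> I\<close> by (rule I_add)
    moreover have "nc_add d d' \<in> ncF n" using \<open>d \<in> ncF n\<close> \<open>d' \<in> ncF n\<close> by (rule add_F)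
    ultimately show ?thesis using \<open>Wk k (nc_add d d')\<close> by blast
  qed
qed

lemma J_scal: "k \<le> n \<Longrightarrow> f \<in> flag_ideal n I k \<Longrightarrow> scal c f \<in> flag_ideal n I k"
  unfolding J_char
proof clarify
  fix g and d :: "'k ncpoly" assume "g \<in> I" "d \<in> ncF n" "Wk k d"
  moreover have "Wk k (scal c d)" using \<open>Wk k d\<close> by (auto simp: Wk_def scal_def)
  ultimately show "\<exists>g'\<in>I. \<exists>d'\<in>ncF n. Wk k d' \<and> scal c (nc_add g d) = nc_add g' d'"
  proof -
    have "scal c (nc_add g d) = nc_add (scal c g) (scal c d)" by (auto simp: nc_add_def scal_def algebra_simps)
    moreover have "scal c g \<in> I" using \<open>g \<in> I\<close> by (rule I_scal)
    moreover have "scal c d \<in> ncF n" using \<open>d \<in> ncF n\<close> by (rule scal_F)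
    ultimately show ?thesis using \<open>Wk k (scal c d)\<close> by blast
  qed
qed

lemma J_zero: "k \<le> n \<Longrightarrow> nc_zero \<in> flag_ideal n I k"
proof -
  have "Wk k (nc_zero::'k ncpoly)" by (simp add: Wk_def nc_zero_def)
  then show "k \<le> n \<Longrightarrow> nc_zero \<in> flag_ideal n I k" using J_W zero_F by blast
qed

lemma J_normal:
  assumes kn: "k \<le> n" and f: "f \<in> flag_ideal n I k" and nf: "\<And>v. f v \<noteq> 0 \<Longrightarrow> nw v"
  shows "Wk k f"
proof -
  obtain g d where g: "g \<in> I" and dF: "d \<in> ncF n" and W: "Wk k d" and fe: "f = nc_add g d"
    using f unfolding J_char[OF kn] by blast
  obtain r h where h: "h \<in> I" and rF: "r \<in> ncF n" and de: "d = nc_add r h"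
    and r: "\<forall>v. r v \<noteq> 0 \<longrightarrow> nw v \<and> bnd {v. d v \<noteq> 0} v"
    using NF[OF dF] unfolding Q_def by blast
  define e where "e = (\<lambda>w. f w - r w)"
  have "e = nc_add g h" by (auto simp: e_def fe de nc_add_def)
  then have eI: "e \<in> I" using g h I_add by simp
  have "nw v" if "e v \<noteq> 0" for v
  proof -
    from that have "f v \<noteq> 0 \<or> r v \<noteq> 0" by (auto simp: e_def)
    then show ?thesis using nf r by blast
  qed
  then have "e = nc_zero" using I_normal_zero[OF eI] by blast
  then have fr: "f = r" by (auto simp: e_def nc_zero_def fun_eq_iff)
  show ?thesis unfolding Wk_def
  proof (intro allI impI)
    fix w assume "f w \<noteq> 0"
    then have "r w \<noteq> 0" using fr by simp
    then obtain u where u: "d u \<noteq> 0" "length w = length u" "w = u \<or> deglex_less w u"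
      using r by (auto simp: bnd_def)
    have "u \<noteq> []" "hd u < k" using W u(1) by (auto simp: Wk_def)
    then show "w \<noteq> [] \<and> hd w < k" using u dl_hd[of w u] by fastforce
  qed
qed

end

lemma ik_iff: "initially_koszul n I \<longleftrightarrow>
  (\<forall>k<n. \<exists>j\<le>n. {a\<in>ncF n. nc_mul (nc_var k) a \<in> flag_ideal n I k} = flag_ideal n I j)"
  unfolding initially_koszul_def
proof safe
  fix k assume H: "\<forall>k\<in>{1..n}. \<exists>j\<le>n. {a \<in> ncF n. nc_mul (nc_var (k - 1)) a \<in> flag_ideal n I (k - 1)} = flag_ideal n I j"
    and k: "k < n"
  from H[rule_format, of "Suc k"] k
  show "\<exists>j\<le>n. {a \<in> ncF n. nc_mul (nc_var k) a \<in> flag_ideal n I k} = flag_ideal n I j" by simp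
next
  fix k assume H: "\<forall>k<n. \<exists>j\<le>n. {a \<in> ncF n. nc_mul (nc_var k) a \<in> flag_ideal n I k} = flag_ideal n I j"
    and k: "k \<in> {1..n}"
  then have "k - 1 < n" by auto
  then show "\<exists>j\<le>n. {a \<in> ncF n. nc_mul (nc_var (k - 1)) a \<in> flag_ideal n I (k - 1)} = flag_ideal n I j"
    using H by blast
qed

lemma sublist_len_eq: "sublist a b \<Longrightarrow> length b \<le> length a \<Longrightarrow> a = b"
proof -
  assume "sublist a b" "length b \<le> length a"
  then obtain p s where 1: "b = p @ a @ s" "length b \<le> length a" unfolding sublist_def by blast
  then have "length p = 0" "length s = 0" by simp_all
  then show "a = b" using 1 by simp
qed

context kz
begin

lemma len2_lm: "g \<in> G \<Longrightarrow> sublist (lm g) [x,y] \<Longrightarrow> lm g = [x,y]"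
  using sublist_len_eq G_len2 by fastforce

lemma short_nw: "length w \<le> 1 \<Longrightarrow> nw w"
  unfolding nw_def using G_len2 sublist_length_le by fastforce

lemma a1:
  assumes k: "k < n" and j: "j \<le> n" and C: "{a\<in>ncF n. nc_mul (nc_var k) a \<in> flag_ideal n I k} = flag_ideal n I j"
    and i: "i < n" "i < j"
  shows "[k,i] \<in> lm ` G"
proof -
  have "Wk j (nc_mono [i] :: 'k ncpoly)" using i by (simp add: Wk_def nc_mono_def)
  then have "nc_mono [i] \<in> flag_ideal n I j" using i by (intro J_W[OF j] mono_F) auto
  then have "nc_mul (nc_var k) (nc_mono [i]) \<in> flag_ideal n I k" using C by blast
  moreover have "nc_mul (nc_var k) (nc_mono [i]) = (nc_mono [k,i] :: 'k ncpoly)"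
  proof
    fix w show "nc_mul (nc_var k) (nc_mono [i]) w = (nc_mono [k,i] :: 'k ncpoly) w"
      by (cases w) (auto simp: nc_mono_def)
  qed
  ultimately have M: "nc_mono [k,i] \<in> flag_ideal n I k" by simp
  show ?thesis
  proof (cases "nw [k,i]")
    case True
    have "\<And>v. (nc_mono [k,i] :: 'k ncpoly) v \<noteq> 0 \<Longrightarrow> nw v"
      using True by (auto simp: nc_mono_def split: if_splits)
    then have "Wk k (nc_mono [k,i] :: 'k ncpoly)"
      using J_normal[OF _ M] k by auto
    then have "(nc_mono [k,i] :: 'k ncpoly) [k,i] \<noteq> 0 \<longrightarrow> [k,i] \<noteq> [] \<and> hd [k,i] < k"
      unfolding Wk_def by blast
    then show ?thesis by (simp add: nc_mono_def)
  next
    case False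
    then obtain g where "g \<in> G" "sublist (lm g) [k,i]" unfolding nw_def by blast
    then show ?thesis using len2_lm by (metis image_eqI)
  qed
qed

lemma a2:
  assumes k: "k < n" and j: "j \<le> n" and C: "{a\<in>ncF n. nc_mul (nc_var k) a \<in> flag_ideal n I k} = flag_ideal n I j"
    and g: "g \<in> G" "lm g = [k,i]"
  shows "i < j"
proof -
  define a where "a = (\<lambda>w. if length w = 1 then g (k#w) else 0)"
  have aF: "a \<in> ncF n"
    by (rule supp_sub_F[OF Cons_vimage_F[OF G_F[OF g(1)] k]]) (auto simp: a_def split: if_splits)
  define e where "e = (\<lambda>w. if w \<noteq> [] \<and> hd w = k then 0 else - g w)"
  have eF: "e \<in> ncF n"
    by (rule supp_sub_F[OF G_F[OF g(1)]]) (auto simp: e_def split: if_splits)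
  have We: "Wk k e"
    unfolding Wk_def
  proof (intro allI impI)
    fix w assume ew: "e w \<noteq> 0"
    then have gw: "g w \<noteq> 0" and nk: "\<not> (w \<noteq> [] \<and> hd w = k)" by (auto simp: e_def split: if_splits)
    have "length w = 2" using G_hom[OF g(1) gw] g(2) by simp
    then have wne: "w \<noteq> []" by auto
    have "w = lm g \<or> deglex_less w (lm g)" using G_max[OF g(1) gw] .
    then have "hd w \<le> k" using dl_hd[of w "lm g"] \<open>length w = 2\<close> g(2) by auto
    then show "w \<noteq> [] \<and> hd w < k" using wne nk by auto
  qed
  have eq: "nc_mul (nc_var k) a = nc_add e g"
  proof
    fix w show "nc_mul (nc_var k) a w = nc_add e g w"
    proof (cases w)
      case Nil then show ?thesis by (simp add: e_def nc_add_def)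
    next
      case (Cons c u)
      have "length u \<noteq> 1 \<Longrightarrow> g (k#u) = 0"
        using G_hom[OF g(1), of "k#u"] g(2) by auto
      then show ?thesis by (auto simp: Cons a_def e_def nc_add_def)
    qed
  qed
  have "nc_mul (nc_var k) a \<in> flag_ideal n I k"
    unfolding eq using k by (intro J_addI J_W eF We G_I g(1)) auto
  then have aJ: "a \<in> flag_ideal n I j" using C aF by blast
  have "Wk j a" by (rule J_normal[OF j aJ]) (auto simp: a_def intro: short_nw split: if_splits)
  then have "a [i] \<noteq> 0 \<longrightarrow> [i] \<noteq> [] \<and> hd [i] < j" unfolding Wk_def by blast
  moreover have "a [i] = 1" using G_lc[OF g(1)] g(2) by (simp add: a_def)
  ultimately show "i < j" by simp
qed

lemma b_quad:
  assumes H: "\<forall>k<n. \<exists>j\<le>n. {a\<in>ncF n. nc_mul (nc_var k) a \<in> flag_ideal n I k} = flag_ideal n I j"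
    and g: "g \<in> G"
  shows "length (lm g) = 2"
proof (rule ccontr)
  assume ne2: "length (lm g) \<noteq> 2"
  then have l3: "3 \<le> length (lm g)" using G_len2[OF g] by simp
  then obtain k u where lmg: "lm g = k # u" by (cases "lm g") auto
  have k: "k < n" using lm_letters[OF g] lmg by auto
  obtain j where j: "j \<le> n" and C: "{a\<in>ncF n. nc_mul (nc_var k) a \<in> flag_ideal n I k} = flag_ideal n I j"
    using H k by blast
  define a where "a = (\<lambda>v. g (k#v))"
  have aF: "a \<in> ncF n" unfolding a_def by (rule Cons_vimage_F[OF G_F[OF g] k])
  define e where "e = (\<lambda>w. if w \<noteq> [] \<and> hd w = k then 0 else - g w)"
  have eF: "e \<in> ncF n"
    by (rule supp_sub_F[OF G_F[OF g]]) (auto simp: e_def split: if_splits)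
  have We: "Wk k e"
    unfolding Wk_def
  proof (intro allI impI)
    fix w assume ew: "e w \<noteq> 0"
    then have gw: "g w \<noteq> 0" and nk: "\<not> (w \<noteq> [] \<and> hd w = k)" by (auto simp: e_def split: if_splits)
    have lw: "length w = length (lm g)" using G_hom[OF g gw] .
    then have wne: "w \<noteq> []" using l3 by auto
    have "w = lm g \<or> deglex_less w (lm g)" using G_max[OF g gw] .
    then have "hd w \<le> k" using dl_hd[of w "lm g"] lw lmg by auto
    then show "w \<noteq> [] \<and> hd w < k" using wne nk by auto
  qed
  have eq: "nc_mul (nc_var k) a = nc_add e g"
  proof
    fix w show "nc_mul (nc_var k) a w = nc_add e g w"
      by (cases w) (auto simp: a_def e_def nc_add_def)
  qed
  have "nc_mul (nc_var k) a \<in> flag_ideal n I k"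
    unfolding eq using k by (intro J_addI J_W eF We G_I g) auto
  then have aJ: "a \<in> flag_ideal n I j" using C aF by blast
  have "Wk j a"
  proof (rule J_normal[OF j aJ])
    fix v assume "a v \<noteq> 0"
    then have gv: "g (k#v) \<noteq> 0" by (simp add: a_def)
    show "nw v"
    proof (cases "k#v = lm g")
      case True
      then have "v = u" using lmg by simp
      moreover have "sublist u (lm g)" using lmg by (simp add: sublist_Cons_right)
      moreover have "u \<noteq> lm g" using lmg by auto
      ultimately show ?thesis using lm_proper_nw[OF g] by blast
    next
      case False
      then have "nw (k#v)" using G_tail_nw[OF g gv] by blast
      then show ?thesis by (rule nw_sub) (simp add: sublist_Cons_right)
    qed
  qed
  moreover have "a u = 1" using G_lc[OF g] lmg by (simp add: a_def)
  ultimately have une: "u \<noteq> []" and hu: "hd u < j" by (auto simp: Wk_def)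
  have "hd u \<in> set (lm g)" using une lmg by simp
  then have "hd u < n" using lm_letters[OF g] by auto
  then have "[k, hd u] \<in> lm ` G" using a1[OF k j C _ hu] by blast
  then obtain g' where g': "g' \<in> G" "lm g' = [k, hd u]" by auto
  have "lm g = [k, hd u] @ tl u" using lmg une by simp
  then have sub: "sublist (lm g') (lm g)" using g'(2) by (metis sublist_append_rightI)
  have "g' \<noteq> g" using g'(2) ne2 by auto
  then show False using G_red[OF g _ g'(1)] sub G_lc[OF g] by auto
qed

end

context kz
begin

lemma c1:
  assumes quad: "\<forall>g\<in>G. length (lm g) = 2"
    and cond: "\<forall>k j i. [k, j] \<in> lm ` G \<and> i < j \<longrightarrow> [k, i] \<in> lm ` G"
    and k: "k < n" and ki: "[k,i] \<in> lm ` G" and u: "set u \<subseteq> {..<n}"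
  shows "nc_mono (k#i#u) \<in> flag_ideal n I k"
proof -
  obtain g where g: "g \<in> G" "lm g = [k,i]" using ki by auto
  define h0 where "h0 = nc_mul g (nc_mono u)"
  have h0I: "h0 \<in> I" unfolding h0_def using G_I[OF g(1)] u by (intro I_mulR mono_F)
  have h0w: "h0 (k#i#u) = 1" using G_lc[OF g(1)] g(2) by (simp add: h0_def mul_mono_right)
  define e where "e = (\<lambda>w. nc_mono (k#i#u) w - h0 w)"
  have eq: "nc_mono (k#i#u) = nc_add e h0" by (auto simp: e_def nc_add_def)
  have kiu: "set (k#i#u) \<subseteq> {..<n}"
    using lm_letters[OF g(1)] g(2) u by auto
  have eF: "e \<in> ncF n"
  proof -
    have "nc_add (nc_mono (k#i#u)) (scal (-1) h0) \<in> ncF n"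
      using kiu h0I by (intro add_F mono_F scal_F I_F)
    then show ?thesis by (simp add: e_def nc_add_def scal_def)
  qed
  have We: "Wk k e"
    unfolding Wk_def
  proof (intro allI impI)
    fix w assume ew: "e w \<noteq> 0"
    have "w \<noteq> k#i#u" using ew h0w by (auto simp: e_def nc_mono_def)
    then have hw: "h0 w \<noteq> 0" using ew by (auto simp: e_def nc_mono_def)
    define v where "v = take (length w - length u) w"
    have lu: "length u \<le> length w" and dw: "drop (length w - length u) w = u" and gv: "g v \<noteq> 0"
      using hw by (auto simp: h0_def mul_mono_right v_def split: if_splits)
    have wv: "w = v @ u" using dw by (metis append_take_drop_id v_def)
    have vne: "v \<noteq> [k,i]" using wv \<open>w \<noteq> k#i#u\<close> by auto
    have lv: "length v = 2" using G_hom[OF g(1) gv] g(2) by simp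
    have nwv: "nw v" using G_tail_nw[OF g(1) gv] vne g(2) by simp
    have dv: "deglex_less v [k,i]" using G_max[OF g(1) gv] vne g(2) by simp
    then have hv: "hd v \<le> k" using dl_hd[of v "[k,i]"] lv by simp
    obtain x y where vxy: "v = [x,y]" using lv
      by (metis (no_types, opaque_lifting) One_nat_def Suc_1 length_0_conv length_Suc_conv)
    have "hd v \<noteq> k"
    proof
      assume "hd v = k"
      then have "x = k" using vxy by simp
      then have "y < i" using dv vxy by (simp add: deglex_less_def)
      then have "[k,y] \<in> lm ` G" using cond ki by blast
      then show False using nwv vxy \<open>x = k\<close> lm_not_nw by auto
    qed
    then show "w \<noteq> [] \<and> hd w < k" using hv wv vxy by auto
  qed
  show ?thesis unfolding eq using k by (intro J_addI J_W eF We h0I) auto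
qed

lemma X_add: "nc_mul (nc_var k) (nc_add f g) = nc_add (nc_mul (nc_var k) f) (nc_mul (nc_var k) (g :: 'k ncpoly))"
proof
  fix w show "nc_mul (nc_var k) (nc_add f g) w = nc_add (nc_mul (nc_var k) f) (nc_mul (nc_var k) g) w"
    by (cases w) (auto simp: nc_add_def)
qed

lemma c2:
  assumes quad: "\<forall>g\<in>G. length (lm g) = 2"
    and cond: "\<forall>k j i. [k, j] \<in> lm ` G \<and> i < j \<longrightarrow> [k, i] \<in> lm ` G"
    and k: "k < n" and j: "j \<le> n" and below: "\<forall>i<j. [k,i] \<in> lm ` G"
    and a: "a \<in> flag_ideal n I j"
  shows "nc_mul (nc_var k) a \<in> flag_ideal n I k"
proof -
  obtain g0 d where g0: "g0 \<in> I" and dF: "d \<in> ncF n" and W: "Wk j d" and ae: "a = nc_add g0 d"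
    using a unfolding J_char[OF j] by blast
  have kn: "k \<le> n" using k by simp
  have "nc_mul (nc_var k) d \<in> flag_ideal n I k"
  proof (rule span_principle[OF mul_F[OF var_F[OF k] dF]])
    show "nc_zero \<in> flag_ideal n I k" by (rule J_zero[OF kn])
    show "\<And>x y. x \<in> flag_ideal n I k \<Longrightarrow> y \<in> flag_ideal n I k \<Longrightarrow> nc_add x y \<in> flag_ideal n I k"
      by (rule J_add[OF kn])
    show "\<And>c x. x \<in> flag_ideal n I k \<Longrightarrow> scal c x \<in> flag_ideal n I k"
      by (rule J_scal[OF kn])
  next
    fix v assume "nc_mul (nc_var k) d v \<noteq> 0"
    then obtain w where v: "v = k#w" and dw: "d w \<noteq> 0" by (cases v) (auto split: if_splits)
    then have "w \<noteq> [] \<and> hd w < j" using W by (auto simp: Wk_def)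
    then obtain i u where w: "w = i#u" and ij: "i < j" by (cases w) auto
    have "set w \<subseteq> {..<n}" using dF dw unfolding ncF_def by blast
    then have u: "set u \<subseteq> {..<n}" using w by simp
    show "nc_mono v \<in> flag_ideal n I k"
      unfolding v w using c1[OF quad cond k _ u] below ij by blast
  qed
  moreover have "nc_mul (nc_var k) g0 \<in> I" using g0 var_F[OF k] by (rule I_mulL)
  ultimately have "nc_add (nc_mul (nc_var k) d) (nc_mul (nc_var k) g0) \<in> flag_ideal n I k"
    using J_addI[OF kn] by blast
  moreover have "nc_add (nc_mul (nc_var k) d) (nc_mul (nc_var k) g0) = nc_mul (nc_var k) a"
    unfolding ae X_add by (auto simp: nc_add_def)
  ultimately show ?thesis by simp
qed

lemma c3:
  assumes quad: "\<forall>g\<in>G. length (lm g) = 2"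
    and cond: "\<forall>k j i. [k, j] \<in> lm ` G \<and> i < j \<longrightarrow> [k, i] \<in> lm ` G"
    and k: "k < n" and j: "j \<le> n" and below: "\<forall>i<j. [k,i] \<in> lm ` G"
    and above: "\<forall>i. j \<le> i \<longrightarrow> [k,i] \<notin> lm ` G"
    and aF: "a \<in> ncF n" and Xa: "nc_mul (nc_var k) a \<in> flag_ideal n I k"
  shows "a \<in> flag_ideal n I j"
proof -
  have kn: "k \<le> n" using k by simp
  obtain r h where h: "h \<in> I" and rF: "r \<in> ncF n" and ae: "a = nc_add r h"
    and r: "\<forall>v. r v \<noteq> 0 \<longrightarrow> nw v \<and> bnd {v. a v \<noteq> 0} v"
    using NF[OF aF] unfolding Q_def by blast
  define r1 where "r1 = (\<lambda>w. if w \<noteq> [] \<and> hd w < j then r w else 0)"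
  define r2 where "r2 = (\<lambda>w. if w \<noteq> [] \<and> hd w < j then 0 else r w)"
  have r1F: "r1 \<in> ncF n" by (rule supp_sub_F[OF rF]) (auto simp: r1_def split: if_splits)
  have r1J: "r1 \<in> flag_ideal n I j" by (rule J_W[OF j r1F]) (auto simp: Wk_def r1_def split: if_splits)
  have X1: "nc_mul (nc_var k) r1 \<in> flag_ideal n I k" by (rule c2[OF quad cond k j below r1J])
  have Xh: "scal (-1) (nc_mul (nc_var k) h) \<in> I" using h var_F[OF k] by (intro I_scal I_mulL)
  have eq: "nc_mul (nc_var k) r2 = nc_add (nc_add (nc_mul (nc_var k) a) (scal (-1) (nc_mul (nc_var k) h)))
              (scal (-1) (nc_mul (nc_var k) r1))"
  proof
    fix w show "nc_mul (nc_var k) r2 w = nc_add (nc_add (nc_mul (nc_var k) a) (scal (-1) (nc_mul (nc_var k) h)))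
              (scal (-1) (nc_mul (nc_var k) r1)) w"
      by (cases w) (auto simp: nc_add_def scal_def r1_def r2_def ae)
  qed
  have X2: "nc_mul (nc_var k) r2 \<in> flag_ideal n I k"
    unfolding eq by (intro J_add[OF kn] J_addI[OF kn] J_scal[OF kn] Xa Xh X1)
  have "Wk k (nc_mul (nc_var k) r2)"
  proof (rule J_normal[OF kn X2])
    fix w assume "nc_mul (nc_var k) r2 w \<noteq> 0"
    then obtain u where w: "w = k#u" and r2u: "r2 u \<noteq> 0" by (cases w) (auto split: if_splits)
    then have ru: "r u \<noteq> 0" and nb: "\<not> (u \<noteq> [] \<and> hd u < j)" by (auto simp: r2_def split: if_splits)
    have nwu: "nw u" using r ru by blast
    show "nw w"
      unfolding nw_def w
    proof
      fix g assume g: "g \<in> G"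
      show "\<not> sublist (lm g) (k#u)"
      proof
        assume "sublist (lm g) (k#u)"
        moreover have "\<not> sublist (lm g) u" using nwu g unfolding nw_def by blast
        ultimately have p: "prefix (lm g) (k#u)" by (simp add: sublist_Cons_right)
        obtain x y where xy: "lm g = [x,y]" using quad g
          by (metis (no_types, opaque_lifting) One_nat_def Suc_1 length_0_conv length_Suc_conv)
        then obtain t where "u = y # t" "x = k" using p by (auto simp: prefix_def)
        then have "[k, hd u] \<in> lm ` G" "j \<le> hd u" using xy g nb by (force, auto)
        then show False using above by blast
      qed
    qed
  qed
  then have "r2 u = 0" for u
  proof -
    assume "Wk k (nc_mul (nc_var k) r2)"
    then have "nc_mul (nc_var k) r2 (k#u) \<noteq> 0 \<longrightarrow> k#u \<noteq> [] \<and> hd (k#u) < k" unfolding Wk_def by blast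
    then show "r2 u = 0" by simp
  qed
  then have "a = nc_add r1 h"
  proof -
    assume z: "\<And>u. r2 u = 0"
    show "a = nc_add r1 h"
    proof
      fix w
      have "r2 w = 0" by (rule z)
      then show "a w = nc_add r1 h w"
        by (cases "w \<noteq> [] \<and> hd w < j") (simp_all add: ae nc_add_def r1_def r2_def)
    qed
  qed
  then show ?thesis using J_addI[OF j r1J h] by simp
qed

lemma ii_to_i:
  assumes quad: "\<forall>g\<in>G. length (lm g) = 2"
    and cond: "\<forall>k j i. [k, j] \<in> lm ` G \<and> i < j \<longrightarrow> [k, i] \<in> lm ` G"
  shows "initially_koszul n I"
  unfolding ik_iff
proof (intro allI impI)
  fix k assume k: "k < n"
  define j where "j = (LEAST j. [k,j] \<notin> lm ` G)"
  have nn: "[k,n] \<notin> lm ` G"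
  proof
    assume "[k,n] \<in> lm ` G"
    then obtain g where "g \<in> G" "lm g = [k,n]" by auto
    then show False using lm_letters[of g] by auto
  qed
  then have jn: "j \<le> n" unfolding j_def by (rule Least_le)
  have below: "\<forall>i<j. [k,i] \<in> lm ` G" unfolding j_def using not_less_Least by blast
  have jnot: "[k,j] \<notin> lm ` G" unfolding j_def using LeastI[of "\<lambda>j. [k,j] \<notin> lm ` G", OF nn] .
  have above: "\<forall>i. j \<le> i \<longrightarrow> [k,i] \<notin> lm ` G"
  proof (intro allI impI)
    fix i assume "j \<le> i"
    show "[k,i] \<notin> lm ` G"
    proof
      assume ki: "[k,i] \<in> lm ` G"
      show False
      proof (cases "j = i")
        case True then show False using ki jnot by simp
      next
        case False
        then have "j < i" using \<open>j \<le> i\<close> by simp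
        then show False using cond ki jnot by blast
      qed
    qed
  qed
  have "{a\<in>ncF n. nc_mul (nc_var k) a \<in> flag_ideal n I k} = flag_ideal n I j"
  proof (intro set_eqI iffI)
    fix a assume "a \<in> {a\<in>ncF n. nc_mul (nc_var k) a \<in> flag_ideal n I k}"
    then show "a \<in> flag_ideal n I j" using c3[OF quad cond k jn below above] by blast
  next
    fix a assume a: "a \<in> flag_ideal n I j"
    then show "a \<in> {a\<in>ncF n. nc_mul (nc_var k) a \<in> flag_ideal n I k}"
      using c2[OF quad cond k jn below a] J_F[OF jn a] by blast
  qed
  then show "\<exists>j\<le>n. {a\<in>ncF n. nc_mul (nc_var k) a \<in> flag_ideal n I k} = flag_ideal n I j"
    using jn by blast
qed

lemma i_to_ii:
  assumes ik: "initially_koszul n I"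
  shows "(\<forall>g\<in>G. length (lm g) = 2) \<and> (\<forall>k j i. [k, j] \<in> lm ` G \<and> i < j \<longrightarrow> [k, i] \<in> lm ` G)"
proof -
  have H: "\<forall>k<n. \<exists>j\<le>n. {a\<in>ncF n. nc_mul (nc_var k) a \<in> flag_ideal n I k} = flag_ideal n I j"
    using ik unfolding ik_iff .
  have "\<forall>g\<in>G. length (lm g) = 2" using b_quad[OF H] by blast
  moreover have "[k, i] \<in> lm ` G" if kj: "[k, j] \<in> lm ` G" and ij: "i < j" for k j i
  proof -
    obtain g where g: "g \<in> G" "lm g = [k,j]" using kj by auto
    have k: "k < n" "j < n" using lm_letters[OF g(1)] g(2) by auto
    obtain j' where j': "j' \<le> n" and C: "{a\<in>ncF n. nc_mul (nc_var k) a \<in> flag_ideal n I k} = flag_ideal n I j'"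
      using H k by blast
    have "j < j'" using a2[OF k(1) j' C g] .
    then show ?thesis using a1[OF k(1) j' C] ij k by simp
  qed
  ultimately show ?thesis by blast
qed

lemma part1:
  "initially_koszul n I \<longleftrightarrow>
     ((\<forall>g\<in>G. \<forall>w. g w \<noteq> 0 \<longrightarrow> length w = 2) \<and>
      (\<forall>k j i. [k, j] \<in> lm ` G \<and> i < j \<longrightarrow> [k, i] \<in> lm ` G))"
proof -
  have "(\<forall>g\<in>G. \<forall>w. g w \<noteq> 0 \<longrightarrow> length w = 2) \<longleftrightarrow> (\<forall>g\<in>G. length (lm g) = 2)"
    using G_hom G_lc by (metis one_neq_zero)
  then show ?thesis using i_to_ii ii_to_i by blast
qed

end

lemma sandwich_mono:
  "nc_mul (nc_mul (nc_mono p) (nc_mono u)) (nc_mono s) = (nc_mono (p@u@s) :: 'k::comm_semiring_1 ncpoly)"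
proof
  fix w
  show "nc_mul (nc_mul (nc_mono p) (nc_mono u)) (nc_mono s) w = (nc_mono (p@u@s) :: 'k ncpoly) w"
  proof (cases "w = p@u@s")
    case True then show ?thesis by (simp only: True sandwich_at) (simp add: nc_mono_def)
  next
    case False
    have "nc_mul (nc_mul (nc_mono p) (nc_mono u)) (nc_mono s) w = (0::'k)"
    proof (rule ccontr)
      assume "nc_mul (nc_mul (nc_mono p) (nc_mono u)) (nc_mono s) w \<noteq> (0::'k)"
      then obtain u' where "w = p@u'@s" "(nc_mono u :: 'k ncpoly) u' \<noteq> 0" using sandwich_nz by blast
      then show False using False by (auto simp: nc_mono_def split: if_splits)
    qed
    then show ?thesis using False by (simp add: nc_mono_def)
  qed
qed

definition NNs :: "nat \<Rightarrow> 'k::zero ncpoly set \<Rightarrow> 'b::zero ncpoly set" where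
  "NNs n G = {f \<in> ncF n. \<forall>w. f w \<noteq> 0 \<longrightarrow> (\<exists>g\<in>G. sublist (lm g) w)}"

context kz
begin


lemma NN_iff: "(f::'b::zero ncpoly) \<in> NNs n G \<longleftrightarrow> f \<in> ncF n \<and> (\<forall>w. f w \<noteq> 0 \<longrightarrow> \<not> nw w)"
  by (auto simp: NNs_def nw_def)

lemma NN_ideal: "two_sided_ideal n (NNs n G :: 'b::field ncpoly set)"
  unfolding two_sided_ideal_def
proof (intro conjI ballI)
  show "(NNs n G :: 'b::field ncpoly set) \<subseteq> ncF n" by (auto simp: NN_iff)
  show "nc_zero \<in> (NNs n G :: 'b::field ncpoly set)" by (auto simp: NN_iff zero_F, simp add: nc_zero_def)
next
  fix f g assume f: "f \<in> (NNs n G :: 'b::field ncpoly set)" and g: "g \<in> (NNs n G :: 'b::field ncpoly set)"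
  have "nc_add f g \<in> ncF n" using f g by (intro add_F) (auto simp: NN_iff)
  moreover have "\<not> nw w" if "nc_add f g w \<noteq> 0" for w
  proof -
    from that have "f w \<noteq> 0 \<or> g w \<noteq> 0" by (auto simp: nc_add_def)
    then show ?thesis using f g by (auto simp: NN_iff)
  qed
  ultimately show "nc_add f g \<in> (NNs n G :: 'b::field ncpoly set)" unfolding NN_iff by blast
next
  fix f and a :: "'b ncpoly" assume f: "f \<in> (NNs n G :: 'b::field ncpoly set)" and a: "a \<in> ncF n"
  have fF: "f \<in> ncF n" using f by (simp add: NN_iff)
  show "nc_mul a f \<in> (NNs n G :: 'b::field ncpoly set)" unfolding NN_iff
  proof (intro CollectI conjI allI impI)
    show "nc_mul a f \<in> ncF n" by (rule mul_F[OF a fF])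
    fix w assume "nc_mul a f w \<noteq> 0"
    then obtain i where "a (take i w) * f (drop i w) \<noteq> 0"
      unfolding nc_mul_def by (auto elim: sum.not_neutral_contains_not_neutral)
    then have "f (drop i w) \<noteq> 0" by auto
    then have "\<not> nw (drop i w)" using f by (simp add: NN_iff)
    moreover have "sublist (drop i w) w" by (metis append_take_drop_id sublist_append_leftI)
    ultimately show "\<not> nw w" using nw_sub by blast
  qed
  show "nc_mul f a \<in> (NNs n G :: 'b::field ncpoly set)" unfolding NN_iff
  proof (intro CollectI conjI allI impI)
    show "nc_mul f a \<in> ncF n" by (rule mul_F[OF fF a])
    fix w assume "nc_mul f a w \<noteq> 0"
    then obtain i where "f (take i w) * a (drop i w) \<noteq> 0"
      unfolding nc_mul_def by (auto elim: sum.not_neutral_contains_not_neutral)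
    then have "f (take i w) \<noteq> 0" by auto
    then have "\<not> nw (take i w)" using f by (simp add: NN_iff)
    moreover have "sublist (take i w) w" by (metis append_take_drop_id sublist_append_rightI)
    ultimately show "\<not> nw w" using nw_sub by blast
  qed
qed

lemma monos_NN: "(nc_mono ` lm ` G :: 'b::field ncpoly set) \<subseteq> (NNs n G :: 'b::field ncpoly set)"
proof
  fix x :: "'b ncpoly" assume "x \<in> (nc_mono ` lm ` G :: 'b::field ncpoly set)"
  then obtain g where g: "g \<in> G" "x = nc_mono (lm g)" by auto
  show "x \<in> (NNs n G :: 'b::field ncpoly set)" unfolding NN_iff g(2)
    using mono_F[OF lm_letters[OF g(1)]] lm_not_nw[OF g(1)]
    by (auto simp: nc_mono_def split: if_splits)
qed

lemma M_eq: "ideal_gen n ((nc_mono ` lm ` G :: 'b::field ncpoly set)) = (NNs n G :: 'b::field ncpoly set)"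
proof
  show "ideal_gen n ((nc_mono ` lm ` G :: 'b::field ncpoly set)) \<subseteq> (NNs n G :: 'b::field ncpoly set)"
    unfolding ideal_gen_def using NN_ideal monos_NN by (intro Inter_lower) blast
next
  show "(NNs n G :: 'b::field ncpoly set) \<subseteq> ideal_gen n ((nc_mono ` lm ` G :: 'b::field ncpoly set))"
    unfolding ideal_gen_def
  proof (intro subsetI InterI)
    fix f and J :: "'b ncpoly set" assume f: "f \<in> (NNs n G :: 'b::field ncpoly set)" and J: "J \<in> {J. two_sided_ideal n J \<and> (nc_mono ` lm ` G :: 'b::field ncpoly set) \<subseteq> J}"
    then have tJ: "two_sided_ideal n J" and GJ: "(nc_mono ` lm ` G :: 'b::field ncpoly set) \<subseteq> J" by auto
    interpret J: tsi n J by (rule tsi.intro[OF tJ])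
    have fF: "f \<in> ncF n" using f by (simp add: NN_iff)
    show "f \<in> J"
    proof (rule span_principle[OF fF])
      show "nc_zero \<in> J" by (rule J.I_zero)
      show "\<And>x y. x \<in> J \<Longrightarrow> y \<in> J \<Longrightarrow> nc_add x y \<in> J" by (rule J.I_add)
      show "\<And>c x. x \<in> J \<Longrightarrow> scal c x \<in> J" by (rule J.I_scal)
    next
      fix v assume fv: "f v \<noteq> 0"
      then have "\<not> nw v" using f by (simp add: NN_iff)
      then obtain g where g: "g \<in> G" "sublist (lm g) v" unfolding nw_def by blast
      then obtain p s where v: "v = p @ lm g @ s" unfolding sublist_def by blast
      have "set v \<subseteq> {..<n}" using fF fv unfolding ncF_def by blast
      then have ps: "set p \<subseteq> {..<n}" "set s \<subseteq> {..<n}" using v by auto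
      have "nc_mono (lm g) \<in> J" using GJ g(1) by blast
      then have "nc_mul (nc_mul (nc_mono p) (nc_mono (lm g))) (nc_mono s) \<in> J"
        using ps by (rule J.I_sandwich)
      then show "nc_mono v \<in> J" unfolding v sandwich_mono .
    qed
  qed
qed

lemma std_M: "standard_ideal n (ideal_gen n ((nc_mono ` lm ` G :: 'b::field ncpoly set)))"
  unfolding M_eq standard_ideal_def
proof (intro conjI ballI allI impI)
  show "two_sided_ideal n (NNs n G :: 'b::field ncpoly set)" by (rule NN_ideal)
  show "homogeneous_set (NNs n G :: 'b::field ncpoly set)" unfolding homogeneous_set_def
  proof (intro ballI allI)
    fix f d assume f: "f \<in> (NNs n G :: 'b::field ncpoly set)"
    have fF: "f \<in> ncF n" using f by (simp add: NN_iff)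
    have "(\<lambda>w. if length w = d then f w else 0) \<in> ncF n"
      by (rule supp_sub_F[OF fF]) (simp split: if_splits)
    then show "(\<lambda>w. if length w = d then f w else 0) \<in> (NNs n G :: 'b::field ncpoly set)"
      using f by (auto simp: NN_iff)
  qed
next
  fix f w assume f: "f \<in> (NNs n G :: 'b::field ncpoly set)" and "length (w::nat list) \<le> 1"
  then have "nw w" using short_nw by blast
  then show "f w = 0" using f by (auto simp: NN_iff)
qed

lemma rgb_M: "reduced_groebner_basis n (ideal_gen n ((nc_mono ` lm ` G :: 'b::field ncpoly set))) ((nc_mono ` lm ` G :: 'b::field ncpoly set))"
  unfolding M_eq reduced_groebner_basis_def groebner_basis_def
proof (intro conjI ballI allI impI)
  show "(nc_mono ` lm ` G :: 'b::field ncpoly set) \<subseteq> (NNs n G :: 'b::field ncpoly set)" by (rule monos_NN)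
  show "nc_zero \<notin> (nc_mono ` lm ` G :: 'b::field ncpoly set)"
  proof
    assume "nc_zero \<in> (nc_mono ` lm ` G :: 'b::field ncpoly set)"
    then obtain u where "nc_zero = (nc_mono u :: 'b ncpoly)" by auto
    then have "nc_zero u = (nc_mono u :: 'b ncpoly) u" by simp
    then show False by (simp add: nc_zero_def nc_mono_def)
  qed
next
  fix f assume f: "f \<in> (NNs n G :: 'b::field ncpoly set)" "f \<noteq> nc_zero"
  have fF: "f \<in> ncF n" using f by (simp add: NN_iff)
  have "\<not> nw (lm f)" using lm_prop(1)[OF fF f(2)] f(1) by (simp add: NN_iff)
  then obtain g where g: "g \<in> G" "sublist (lm g) (lm f)" unfolding nw_def by blast
  then show "\<exists>g'\<in>(nc_mono ` lm ` G :: 'b::field ncpoly set). sublist (lm g') (lm f)"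
    by (intro bexI[where x="nc_mono (lm g)"]) (auto simp: lm_mono)
next
  fix g' assume "g' \<in> (nc_mono ` lm ` G :: 'b::field ncpoly set)"
  then obtain g where "g \<in> G" "g' = nc_mono (lm g)" by blast
  then show "g' (lm g') = 1" by (simp add: lm_mono) (simp add: nc_mono_def)
next
  fix g' w g'' assume g': "g' \<in> (nc_mono ` lm ` G :: 'b::field ncpoly set)" and w: "g' w \<noteq> 0"
    and g'': "g'' \<in> (nc_mono ` lm ` G :: 'b::field ncpoly set)" and ne: "g'' \<noteq> g' \<or> w \<noteq> lm g'"
  obtain g where g: "g \<in> G" "g' = nc_mono (lm g)" using g' by auto
  obtain h where h: "h \<in> G" "g'' = nc_mono (lm h)" using g'' by auto
  have wg: "w = lm g" using w g(2) by (simp add: nc_mono_def split: if_splits)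
  then have "g'' \<noteq> g'" using ne g(2) by (auto simp: lm_mono)
  then have "h \<noteq> g" using g h by auto
  then have "\<not> sublist (lm h) (lm g)" using G_red[OF g(1) _ h(1)] G_lc[OF g(1)] by auto
  then show "\<not> sublist (lm g'') w" using wg h(2) by (simp add: lm_mono)
qed

lemma part2:
  "initially_koszul n I \<longleftrightarrow> initially_koszul n (ideal_gen n ((nc_mono ` lm ` G :: 'b::field ncpoly set)))"
proof -
  interpret M: kz n "ideal_gen n ((nc_mono ` lm ` G :: 'b::field ncpoly set))" "(nc_mono ` lm ` G :: 'b::field ncpoly set)"
  proof (rule kz.intro)
    show "tsi n (ideal_gen n ((nc_mono ` lm ` G :: 'b::field ncpoly set)))"
      using std_M by (auto simp: tsi_def standard_ideal_def)
    show "kz_axioms n (ideal_gen n ((nc_mono ` lm ` G :: 'b::field ncpoly set))) ((nc_mono ` lm ` G :: 'b::field ncpoly set))"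
      by (rule kz_axioms.intro[OF std_M rgb_M])
  qed
  have lmeq: "lm ` (nc_mono ` lm ` G :: 'b::field ncpoly set) = lm ` G"
    by (simp add: image_image lm_mono)
  have q1: "(\<forall>g\<in>G. \<forall>w. g w \<noteq> 0 \<longrightarrow> length w = 2) \<longleftrightarrow> (\<forall>g\<in>G. length (lm g) = 2)"
    using G_hom G_lc by (metis one_neq_zero)
  have q2: "(\<forall>g'\<in>(nc_mono ` lm ` G :: 'b::field ncpoly set). \<forall>w. g' w \<noteq> 0 \<longrightarrow> length w = 2) \<longleftrightarrow> (\<forall>g\<in>G. length (lm g) = 2)"
    by (auto simp: nc_mono_def split: if_splits)
  show ?thesis using part1 M.part1 q1 q2 lmeq by simp
qed

end

theorem mainTheorem7:
  fixes n :: nat and I G :: "('k::field) ncpoly set"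
  assumes "standard_ideal n I"
    and "reduced_groebner_basis n I G"
  shows "(initially_koszul n I \<longleftrightarrow>
            ((\<forall>g\<in>G. \<forall>w. g w \<noteq> 0 \<longrightarrow> length w = 2) \<and>
             (\<forall>k j i. [k, j] \<in> lm ` G \<and> i < j \<longrightarrow> [k, i] \<in> lm ` G)))
       \<and> (initially_koszul n I \<longleftrightarrow>
            initially_koszul n (ideal_gen n (nc_mono ` lm ` G)))"
proof -
  interpret kz n I G
  proof (rule kz.intro)
    show "tsi n I" using assms(1) by (auto simp: tsi_def standard_ideal_def)
    show "kz_axioms n I G" by (rule kz_axioms.intro[OF assms])
  qed
  show ?thesis using part1 part2 by blast
qed

end
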